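(* Let $(X,T)$ be a minimal system, $d\ge2$, and suppose the factor map $\pi:X\to Y=X_{eq}$ onto the maximal equicontinuous factor is almost one-to-one. Let $A=\{y\in X_{eq}:|\pi^{-1}(y)|\ge2\}$. (1) If $2A-A$ is of first category in $X_{eq}$, then $X_{eq}$ is a $2$-step topological characteristic factor of $X$ (saturation for $T\times T^2$). (2) If $d\ge3$ and $B_d:=\bigcup_{1\le i<j\le d}\left(\frac{j}{j-i}A-\frac{i}{j-i}A\right)$ is of first category, then $X_{eq}$ is a $d$-step topological characteristic factor of $X$ (saturation for $T\times T^2\times\cdots\times T^d$).
   Context: $X_{eq}$ is a compact abelian (monothetic) group on which $T$ acts as translation. For an abelian group $G$, $A\subset G$ and rational $r=p/q$, $rA=\{g\in G: qg=pa\text{ for some }a\in A\}$; $B-C=\{b-c:b\in B,c\in C\}$. $Y$ is a $d$-step topological characteristic factor of $X$ via $\pi$ if there is a dense $G_\delta$ set $\Omega\subset X$ such that for all $x\in\Omega$, $L_x=\overline{\{(T^nx,\dots,T^{dn}x):n\in\mathbb{Z}\}}$ satisfies $(\pi^{(d)})^{-1}(\pi^{(d)}(L_x))=L_x$, where $\pi^{(d)}=\pi\times\cdots\times\pi$. *)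

theory Defs
  imports "HOL-Analysis.Analysis"
begin

definition zpow :: "('a \<Rightarrow> 'a) \<Rightarrow> ('a \<Rightarrow> 'a) \<Rightarrow> int \<Rightarrow> 'a \<Rightarrow> 'a" where
  "zpow f g n = (if 0 \<le> n then f ^^ nat n else g ^^ nat (- n))"

text \<open>Topological dynamical system (X,T): X = UNIV of a compact metric type, T a homeomorphism.\<close>
definition tds :: "('a::metric_space \<Rightarrow> 'a) \<Rightarrow> bool" where
  "tds T \<longleftrightarrow> compact (UNIV::'a set) \<and> continuous_on UNIV T \<and> bij T"

definition minimal_system :: "('a::metric_space \<Rightarrow> 'a) \<Rightarrow> bool" where
  "minimal_system T \<longleftrightarrow> tds T \<and> (\<forall>x. closure {zpow T (inv T) n x | n. True} = UNIV)"

definition equicont :: "'z::metric_space set \<Rightarrow> ('z \<Rightarrow> 'z) \<Rightarrow> ('z \<Rightarrow> 'z) \<Rightarrow> bool" where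
  "equicont Z S S' \<longleftrightarrow> (\<forall>e>0. \<exists>\<delta>>0. \<forall>z\<in>Z. \<forall>z'\<in>Z. dist z z' < \<delta> \<longrightarrow>
      (\<forall>n::int. dist (zpow S S' n z) (zpow S S' n z') < e))"

text \<open>An equicontinuous factor (Z,S) of (X,T) via phi. Every compact metric space embeds
  into the Hilbert cube, so Z ranges over compact subsets of nat => real (product metric).\<close>
definition eq_factor :: "('a::metric_space \<Rightarrow> 'a) \<Rightarrow> (nat \<Rightarrow> real) set \<Rightarrow>
    ((nat \<Rightarrow> real) \<Rightarrow> (nat \<Rightarrow> real)) \<Rightarrow> ((nat \<Rightarrow> real) \<Rightarrow> (nat \<Rightarrow> real)) \<Rightarrow>
    ('a \<Rightarrow> (nat \<Rightarrow> real)) \<Rightarrow> bool" where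
  "eq_factor T Z S S' \<phi> \<longleftrightarrow> compact Z \<and> homeomorphism Z Z S S' \<and>
      continuous_on UNIV \<phi> \<and> range \<phi> = Z \<and> (\<forall>x. \<phi> (T x) = S (\<phi> x)) \<and> equicont Z S S'"

definition max_eq_factor :: "('a::metric_space \<Rightarrow> 'a) \<Rightarrow>
    ('a \<Rightarrow> 'b::{topological_ab_group_add, metric_space}) \<Rightarrow> 'b \<Rightarrow> bool" where
  "max_eq_factor T \<pi> \<alpha> \<longleftrightarrow> compact (UNIV::'b set) \<and> continuous_on UNIV \<pi> \<and> surj \<pi> \<and>
      (\<forall>x. \<pi> (T x) = \<pi> x + \<alpha>) \<and> equicont UNIV (\<lambda>y. y + \<alpha>) (\<lambda>y. y - \<alpha>) \<and>
      (\<forall>Z S S' \<phi>. eq_factor T Z S S' \<phi> \<longrightarrow>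
          (\<exists>\<psi>. continuous_on UNIV \<psi> \<and> (\<forall>x. \<phi> x = \<psi> (\<pi> x))))"

definition almost_one_to_one :: "('a::topological_space \<Rightarrow> 'b) \<Rightarrow> bool" where
  "almost_one_to_one \<pi> \<longleftrightarrow> gdelta {x. \<pi> -` {\<pi> x} = {x}} \<and> closure {x. \<pi> -` {\<pi> x} = {x}} = UNIV"

definition gmult :: "int \<Rightarrow> 'b::ab_group_add \<Rightarrow> 'b" where
  "gmult k g = (if 0 \<le> k then ((+) g ^^ nat k) 0 else - (((+) g ^^ nat (- k)) 0))"

text \<open>rA = {g. q g = p a for some a in A}, r = p/q in lowest terms, q > 0.\<close>
definition ratset :: "rat \<Rightarrow> 'b::ab_group_add set \<Rightarrow> 'b set" where
  "ratset r A = (case quotient_of r of (p, q) \<Rightarrow> {g. \<exists>a\<in>A. gmult q g = gmult p a})"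

definition setdiff_grp :: "'b::ab_group_add set \<Rightarrow> 'b set \<Rightarrow> 'b set" where
  "setdiff_grp B C = {b - c | b c. b \<in> B \<and> c \<in> C}"

definition first_category :: "'b::topological_space set \<Rightarrow> bool" where
  "first_category S \<longleftrightarrow> (\<exists>F :: nat \<Rightarrow> 'b set. S \<subseteq> (\<Union>n. F n) \<and> (\<forall>n. interior (closure (F n)) = {}))"

text \<open>d-tuples are extensional functions on {1..d} (undefined elsewhere), with the product topology.\<close>
definition Lset :: "('a::metric_space \<Rightarrow> 'a) \<Rightarrow> nat \<Rightarrow> 'a \<Rightarrow> (nat \<Rightarrow> 'a) set" where
  "Lset T d x = closure {(\<lambda>k. if k \<in> {1..d} then zpow T (inv T) (int k * n) x else undefined) | n. True}"

definition prodmap :: "('a \<Rightarrow> 'b) \<Rightarrow> nat \<Rightarrow> (nat \<Rightarrow> 'a) \<Rightarrow> (nat \<Rightarrow> 'b)" where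
  "prodmap \<pi> d f = (\<lambda>k. if k \<in> {1..d} then \<pi> (f k) else undefined)"

definition top_char_factor :: "('a::metric_space \<Rightarrow> 'a) \<Rightarrow> ('a \<Rightarrow> 'b) \<Rightarrow> nat \<Rightarrow> bool" where
  "top_char_factor T \<pi> d \<longleftrightarrow> (\<exists>\<Omega>. gdelta \<Omega> \<and> closure \<Omega> = UNIV \<and>
     (\<forall>x\<in>\<Omega>. {f \<in> extensional {1..d}. prodmap \<pi> d f \<in> prodmap \<pi> d ` Lset T d x} = Lset T d x))"

end

theory Submission
  imports Defs
begin


lemma gm_nat: "gmult (int n) g = ((+) g ^^ n) 0"
  by (simp add: gmult_def)

lemma gm_0 [simp]: "gmult 0 g = 0"
  by (simp add: gmult_def)

lemma gm_1 [simp]: "gmult 1 g = g"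
  by (simp add: gmult_def)

lemma gm_succ: "gmult (k + 1) g = gmult k g + g"
proof (cases "0 \<le> k")
  case True
  then have "nat (k+1) = Suc (nat k)" by simp
  then show ?thesis using True by (simp add: gmult_def add.commute)
next
  case False
  then have "nat (- k) = Suc (nat (- (k+1)))" by simp
  then show ?thesis using False by (simp add: gmult_def algebra_simps)
qed

lemma gm_pred: "gmult (k - 1) g = gmult k g - g"
  using gm_succ[of "k - 1" g] by (simp add: algebra_simps)

lemma gm_add: "gmult (a + b) g = gmult a g + gmult b g"
proof (induction b rule: int_induct[where k=0])
  case base
  then show ?case by simp
next
  case (step1 i)
  then show ?case using gm_succ[of "a + i" g] gm_succ[of i g] by (simp add: algebra_simps)
next
  case (step2 i)
  have "gmult (a + (i - 1)) g = gmult ((a + i) - 1) g" by (simp add: algebra_simps)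
  also have "\<dots> = gmult (a + i) g - g" by (rule gm_pred)
  also have "\<dots> = gmult a g + (gmult i g - g)" using step2 by (simp add: algebra_simps)
  also have "\<dots> = gmult a g + gmult (i - 1) g" by (simp add: gm_pred)
  finally show ?case .
qed

lemma gm_neg: "gmult (- a) g = - gmult a g"
proof -
  have "gmult a g + gmult (- a) g = 0" using gm_add[of a "-a" g] by simp
  then show ?thesis by (metis add.inverse_unique)
qed

lemma gm_diff: "gmult (a - b) g = gmult a g - gmult b g"
  using gm_add[of a "-b" g] gm_neg[of b g] by simp

lemma gm_mult: "gmult (a * b) g = gmult a (gmult b g)"
proof (induction a rule: int_induct[where k=0])
  case base
  then show ?case by simp
next
  case (step1 i)
  then show ?case using gm_add[of "i*b" b g] gm_succ[of i "gmult b g"] by (simp add: algebra_simps)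
next
  case (step2 i)
  have "gmult ((i - 1) * b) g = gmult (i * b - b) g" by (simp add: algebra_simps)
  also have "\<dots> = gmult (i * b) g - gmult b g" by (rule gm_diff)
  also have "\<dots> = gmult (i - 1) (gmult b g)" using step2 by (simp add: gm_pred)
  finally show ?case .
qed

lemma gm_zero [simp]: "gmult k 0 = 0"
  by (induction k rule: int_induct[where k=0]) (simp_all add: gm_succ gm_pred)

lemma gm_plus: "gmult k (g + h) = gmult k g + gmult k h"
proof (induction k rule: int_induct[where k=0])
  case base
  then show ?case by simp
next
  case (step1 i)
  then show ?case by (simp only: gm_succ) (simp add: algebra_simps)
next
  case (step2 i)
  then show ?case by (simp only: gm_pred) (simp add: algebra_simps)
qed

lemma gm_uminus: "gmult k (- g) = - gmult k g"
proof -
  have "gmult k g + gmult k (- g) = 0" using gm_plus[of k g "-g"] gm_plus[of k 0 0] by simp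
  then show ?thesis by (metis add.inverse_unique)
qed

lemma gm_minus: "gmult k (g - h) = gmult k g - gmult k h"
  using gm_plus[of k g "-h"] gm_uminus[of k h] by simp


lemma gm_cont_nat: "continuous_on UNIV (\<lambda>g::'b::topological_ab_group_add. ((+) g ^^ n) 0)"
proof (induction n)
  case 0
  then show ?case by simp
next
  case (Suc n)
  have "continuous_on UNIV (\<lambda>g::'b. g + ((+) g ^^ n) 0)"
    by (intro continuous_intros Suc)
  then show ?case by simp
qed

lemma gm_cont: "continuous_on UNIV (gmult k :: 'b::topological_ab_group_add \<Rightarrow> 'b)"
proof (cases "0 \<le> k")
  case True
  then have "gmult k = (\<lambda>g::'b. ((+) g ^^ nat k) 0)" by (simp add: gmult_def fun_eq_iff)
  then show ?thesis using gm_cont_nat by simp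
next
  case False
  then have "gmult k = (\<lambda>g::'b. - ((+) g ^^ nat (-k)) 0)" by (simp add: gmult_def fun_eq_iff)
  then show ?thesis using continuous_on_minus[OF gm_cont_nat[of "nat (-k)"]] by simp
qed

lemma quot_nat:
  assumes "coprime j m" "m > 0"
  shows "quotient_of (of_nat j / of_nat m :: rat) = (int j, int m)"
proof -
  have "of_nat j / of_nat m = Fract (int j) (int m)"
    by (simp add: Fract_of_int_quotient)
  moreover have "coprime (int j) (int m)" using assms by simp
  ultimately show ?thesis unfolding quotient_of_def
    using assms by (intro the1_equality[OF quotient_of_unique]) auto
qed




lemma seq_inv_tendsto:
  fixes z :: "nat \<Rightarrow> 'c::metric_space"
  assumes "\<And>n. dist (z n) c < inverse (real (Suc n))"
  shows "z \<longlonglongrightarrow> c"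
proof (rule metric_LIMSEQ_I)
  fix r :: real assume "r > 0"
  then obtain N where N: "inverse (real (Suc N)) < r" using reals_Archimedean by blast
  show "\<exists>N. \<forall>n\<ge>N. dist (z n) c < r"
  proof (intro exI allI impI)
    fix n assume "N \<le> n"
    then have "inverse (real (Suc n)) \<le> inverse (real (Suc N))"
      by (simp add: le_imp_inverse_le)
    then show "dist (z n) c < r" using assms[of n] N by linarith
  qed
qed

lemma dense_meets_open:
  assumes "closure S = UNIV" "open U" "x \<in> U"
  shows "\<exists>y\<in>S. y \<in> U"
  using open_Int_closure_eq_empty[OF assms(2), of S] assms by auto

lemma cont_UNIV_isCont: "continuous_on UNIV f \<Longrightarrow> isCont f x"
  using continuous_on_eq_continuous_at[of UNIV f] by simp

lemma zpow_succ:
  assumes "bij T"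
  shows "zpow T (inv T) (n + 1) x = T (zpow T (inv T) n x)"
proof (cases "0 \<le> n")
  case True
  then have "nat (n+1) = Suc (nat n)" by simp
  then show ?thesis using True by (simp add: zpow_def)
next
  case False
  then obtain m where m: "nat (- n) = Suc m" by (metis gr0_implies_Suc nat_0_iff not_le neg_0_less_iff_less zero_less_nat_eq)
  have "zpow T (inv T) (n + 1) x = (inv T ^^ m) x"
  proof (cases "n + 1 = 0")
    case True
    then have "m = 0" using m by simp
    then show ?thesis using True by (simp add: zpow_def)
  next
    case False
    then have "nat (- (n+1)) = m" "\<not> 0 \<le> n + 1" using m \<open>\<not> 0 \<le> n\<close> by auto
    then show ?thesis by (simp add: zpow_def)
  qed
  moreover have "zpow T (inv T) n x = inv T ((inv T ^^ m) x)"
    using False m by (simp add: zpow_def)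
  ultimately show ?thesis using assms by (simp add: bij_is_surj surj_f_inv_f)
qed

lemma cont_plus_c: "continuous_on S (\<lambda>z::'b::topological_ab_group_add. c + z)"
  by (intro continuous_intros)

locale sett =
  fixes T :: "'a::metric_space \<Rightarrow> 'a"
    and \<pi> :: "'a \<Rightarrow> 'b::{topological_ab_group_add, metric_space}"
    and \<alpha> :: 'b
  assumes minT: "minimal_system T"
    and maxeq: "max_eq_factor T \<pi> \<alpha>"
    and a11: "almost_one_to_one \<pi>"
begin

definition "Aset = {y. \<exists>x1 x2. x1 \<noteq> x2 \<and> \<pi> x1 = y \<and> \<pi> x2 = y}"
definition "X0 = {x. \<pi> -` {\<pi> x} = {x}}"

lemma compX: "compact (UNIV :: 'a set)" and bijT: "bij T"
  and orbX: "\<And>x. closure {zpow T (inv T) n x | n. True} = UNIV"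
  using minT by (auto simp: minimal_system_def tds_def)

lemma compY: "compact (UNIV :: 'b set)" and contpi: "continuous_on UNIV \<pi>"
  and surjpi: "surj \<pi>" and piT: "\<And>x. \<pi> (T x) = \<pi> x + \<alpha>"
  using maxeq by (auto simp: max_eq_factor_def)

lemma X0_dense: "closure X0 = UNIV"
  using a11 by (simp add: almost_one_to_one_def X0_def)

lemma pi_invT: "\<pi> (inv T x) = \<pi> x - \<alpha>"
proof -
  have "\<pi> (T (inv T x)) = \<pi> x" using bijT by (simp add: bij_is_surj surj_f_inv_f)
  then show ?thesis using piT[of "inv T x"] by (simp add: algebra_simps)
qed

lemma A_shift1: "a \<in> Aset \<Longrightarrow> a + \<alpha> \<in> Aset"
proof -
  assume "a \<in> Aset"
  then obtain x1 x2 where "x1 \<noteq> x2" "\<pi> x1 = a" "\<pi> x2 = a" by (auto simp: Aset_def)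
  then have "T x1 \<noteq> T x2" "\<pi> (T x1) = a + \<alpha>" "\<pi> (T x2) = a + \<alpha>"
    using bijT piT by (auto simp: bij_def inj_eq)
  then show ?thesis unfolding Aset_def by blast
qed

lemma A_shift2: "a \<in> Aset \<Longrightarrow> a - \<alpha> \<in> Aset"
proof -
  assume "a \<in> Aset"
  then obtain x1 x2 where "x1 \<noteq> x2" "\<pi> x1 = a" "\<pi> x2 = a" by (auto simp: Aset_def)
  moreover have "inj (inv T)" using bijT by (simp add: bij_imp_bij_inv bij_is_inj)
  ultimately have "inv T x1 \<noteq> inv T x2" "\<pi> (inv T x1) = a - \<alpha>" "\<pi> (inv T x2) = a - \<alpha>"
    using pi_invT by (auto simp: inj_eq)
  then show ?thesis unfolding Aset_def by blast
qed

lemma A_shift: "a \<in> Aset \<Longrightarrow> a + gmult s \<alpha> \<in> Aset"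
proof (induction s rule: int_induct[where k=0])
  case base
  then show ?case by simp
next
  case (step1 i)
  then show ?case using A_shift1[of "a + gmult i \<alpha>"] by (simp add: gm_succ add.assoc)
next
  case (step2 i)
  then show ?case using A_shift2[of "a + gmult i \<alpha>"] by (simp add: gm_pred algebra_simps)
qed

lemma pi_zpow: "\<pi> (zpow T (inv T) n x) = \<pi> x + gmult n \<alpha>"
proof (induction n rule: int_induct[where k=0])
  case base
  then show ?case by (simp add: zpow_def)
next
  case (step1 i)
  then show ?case using zpow_succ[OF bijT, of i x] piT by (simp add: gm_succ add.assoc)
next
  case (step2 i)
  have "\<pi> (zpow T (inv T) i x) = \<pi> (zpow T (inv T) (i - 1) x) + \<alpha>"
    using zpow_succ[OF bijT, of "i - 1" x] piT by simp
  then show ?case using step2 by (simp add: gm_pred algebra_simps)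
qed

lemma orbY: "closure (range (\<lambda>n. gmult n \<alpha>)) = UNIV"
proof -
  obtain x :: 'a where True by simp
  let ?O = "{zpow T (inv T) n x | n. True}"
  have "UNIV = \<pi> ` closure ?O" using orbX[of x] surjpi by simp
  also have "\<dots> \<subseteq> closure (\<pi> ` ?O)"
    by (rule continuous_image_closure_subset[OF contpi]) simp
  also have "\<pi> ` ?O = range (\<lambda>n. \<pi> (zpow T (inv T) n x))" by auto
  also have "\<dots> = (\<lambda>g. g + \<pi> x) ` range (\<lambda>n. gmult n \<alpha>)"
    by (simp add: pi_zpow image_image add.commute)
  finally have *: "UNIV \<subseteq> closure ((\<lambda>g. g + \<pi> x) ` range (\<lambda>n. gmult n \<alpha>))" .
  have c: "continuous_on UNIV (\<lambda>z. z - \<pi> x)" by (intro continuous_intros)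
  have "UNIV = (\<lambda>z. z - \<pi> x) ` UNIV"
    by (metis surj_def add_diff_cancel)
  also have "\<dots> \<subseteq> (\<lambda>z. z - \<pi> x) ` closure ((\<lambda>g. g + \<pi> x) ` range (\<lambda>n. gmult n \<alpha>))"
    using * by blast
  also have "\<dots> \<subseteq> closure ((\<lambda>z. z - \<pi> x) ` (\<lambda>g. g + \<pi> x) ` range (\<lambda>n. gmult n \<alpha>))"
    by (rule continuous_image_closure_subset[OF c]) simp
  also have "(\<lambda>z. z - \<pi> x) ` (\<lambda>g. g + \<pi> x) ` range (\<lambda>n. gmult n \<alpha>) = range (\<lambda>n. gmult n \<alpha>)"
    by (auto simp: image_image)
  finally show ?thesis by blast
qed

lemma M_compact: "compact (range (gmult k :: 'b \<Rightarrow> 'b))"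
  using compact_continuous_image[OF gm_cont compY] by simp

lemma M_cover:
  assumes "k > 0"
  shows "UNIV = (\<Union>r\<in>{0..<k}. (\<lambda>z. gmult r \<alpha> + z) ` range (gmult k))"
proof -
  let ?U = "(\<Union>r\<in>{0..<k}. (\<lambda>z. gmult r \<alpha> + z) ` range (gmult k))"
  have cl: "\<And>r. closed ((\<lambda>z. gmult r \<alpha> + z) ` range (gmult k))"
    by (rule compact_imp_closed, rule compact_continuous_image[OF _ M_compact], rule cont_plus_c)
  have "closed ?U"
    by (rule closed_UN) (use cl in auto)
  moreover have "range (\<lambda>n. gmult n \<alpha>) \<subseteq> ?U"
  proof
    fix z assume "z \<in> range (\<lambda>n. gmult n \<alpha>)"
    then obtain n where n: "z = gmult n \<alpha>" by auto
    have "n = n mod k + k * (n div k)" by simp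
    then have "gmult n \<alpha> = gmult (n mod k) \<alpha> + gmult k (gmult (n div k) \<alpha>)"
      by (metis gm_add gm_mult)
    moreover have "n mod k \<in> {0..<k}" using assms by simp
    ultimately show "z \<in> ?U" using n by blast
  qed
  ultimately have "closure (range (\<lambda>n. gmult n \<alpha>)) \<subseteq> ?U" by (rule closure_minimal[rotated])
  then show ?thesis using orbY by auto
qed

lemma M_open:
  assumes "k > 0"
  shows "open (range (gmult k :: 'b \<Rightarrow> 'b))"
proof -
  let ?M = "range (gmult k :: 'b \<Rightarrow> 'b)"
  have eqM: "- ?M = (\<Union>r\<in>{r\<in>{0..<k}. gmult r \<alpha> \<notin> ?M}. (\<lambda>z. gmult r \<alpha> + z) ` ?M)"
  proof
    show "- ?M \<subseteq> (\<Union>r\<in>{r\<in>{0..<k}. gmult r \<alpha> \<notin> ?M}. (\<lambda>z. gmult r \<alpha> + z) ` ?M)"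
    proof
      fix z assume z: "z \<in> - ?M"
      then obtain r w where r: "r \<in> {0..<k}" "z = gmult r \<alpha> + gmult k w"
        using M_cover[OF assms] by blast
      have "gmult r \<alpha> \<notin> ?M"
      proof
        assume "gmult r \<alpha> \<in> ?M"
        then obtain v where "gmult r \<alpha> = gmult k v" by auto
        then have "z = gmult k (v + w)" using r by (simp add: gm_plus)
        then show False using z by auto
      qed
      then show "z \<in> (\<Union>r\<in>{r\<in>{0..<k}. gmult r \<alpha> \<notin> ?M}. (\<lambda>z. gmult r \<alpha> + z) ` ?M)"
        using r by blast
    qed
  next
    show "(\<Union>r\<in>{r\<in>{0..<k}. gmult r \<alpha> \<notin> ?M}. (\<lambda>z. gmult r \<alpha> + z) ` ?M) \<subseteq> - ?M"
    proof clarify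
      fix r w v
      assume r: "gmult r \<alpha> \<notin> ?M" and e: "gmult r \<alpha> + gmult k w = gmult k v"
      then have "gmult r \<alpha> = gmult k (v - w)" by (simp add: gm_minus algebra_simps)
      then show False using r by auto
    qed
  qed
  have cl: "\<And>r. closed ((\<lambda>z. gmult r \<alpha> + z) ` ?M)"
    by (rule compact_imp_closed, rule compact_continuous_image[OF _ M_compact], rule cont_plus_c)
  moreover have "finite {r\<in>{0..<k}. gmult r \<alpha> \<notin> ?M}" by (rule finite_subset[of _ "{0..<k}"]) auto
  ultimately have "closed (\<Union>r\<in>{r\<in>{0..<k}. gmult r \<alpha> \<notin> ?M}. (\<lambda>z. gmult r \<alpha> + z) ` ?M)"
    by (intro closed_UN) auto
  then show ?thesis using eqM by (metis closed_def double_complement)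
qed

end



lemma baire_compact:
  fixes \<G> :: "'c::metric_space set set"
  assumes "compact (UNIV::'c set)" "countable \<G>" "\<And>G. G \<in> \<G> \<Longrightarrow> closed G \<and> interior G = {}"
  shows "interior (\<Union>\<G>) = {}"
proof -
  have "compact_space (euclidean :: 'c topology)"
    using assms(1) by (simp add: compact_space_def compactin_euclidean_iff)
  then have "locally_compact_space (euclidean :: 'c topology)"
    by (rule compact_imp_locally_compact_space)
  then have H: "completely_metrizable_space (euclidean :: 'c topology) \<or> locally_compact_space (euclidean :: 'c topology) \<and> regular_space (euclidean :: 'c topology)"
    using regular_space_euclidean by blast
  have "euclidean interior_of \<Union>\<G> = {}"
  proof (rule Baire_category_alt[OF H assms(2)])
    fix G assume "G \<in> \<G>"
    then show "closedin euclidean G \<and> euclidean interior_of G = {}"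
      using assms(3) by (simp add: euclidean_interior_of closed_closedin[symmetric])
  qed
  then show ?thesis by (simp add: euclidean_interior_of)
qed

context sett begin

lemma mult_open:
  fixes g :: 'b
  assumes "k > 0" "open V" "g \<in> V"
  shows "\<exists>e>0. \<forall>z. dist z (gmult k g) < e \<longrightarrow> (\<exists>w\<in>V. gmult k w = z)"
proof (rule ccontr)
  assume neg: "\<not> ?thesis"
  have "gmult k g \<in> range (gmult k)" by simp
  then obtain e0 where e0': "e0 > 0" "ball (gmult k g) e0 \<subseteq> range (gmult k)"
    using openE[OF M_open[OF assms(1)]] by blast
  have e0: "z \<in> range (gmult k)" if "dist z (gmult k g) < e0" for z
  proof -
    have "z \<in> ball (gmult k g) e0" using that by (simp add: dist_commute)
    then show ?thesis using e0'(2) by (rule subsetD[rotated])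
  qed
  have neg2: "\<exists>z. dist z (gmult k g) < e \<and> \<not> (\<exists>w\<in>V. gmult k w = z)" if "e > 0" for e
  proof (rule ccontr)
    assume "\<not> (\<exists>z. dist z (gmult k g) < e \<and> \<not> (\<exists>w\<in>V. gmult k w = z))"
    then have "\<forall>z. dist z (gmult k g) < e \<longrightarrow> (\<exists>w\<in>V. gmult k w = z)" by blast
    then show False using neg that by blast
  qed
  have ex: "\<forall>n. \<exists>z. dist z (gmult k g) < min e0 (inverse (real (Suc n))) \<and> \<not> (\<exists>w\<in>V. gmult k w = z)"
  proof
    fix n
    have "min e0 (inverse (real (Suc n))) > 0" using e0'(1) by simp
    then show "\<exists>z. dist z (gmult k g) < min e0 (inverse (real (Suc n))) \<and> \<not> (\<exists>w\<in>V. gmult k w = z)"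
      by (rule neg2)
  qed
  obtain z where z0: "\<forall>n. dist (z n) (gmult k g) < min e0 (inverse (real (Suc n))) \<and> \<not> (\<exists>w\<in>V. gmult k w = z n)"
    using choice[OF ex] by blast
  have z1: "dist (z n) (gmult k g) < inverse (real (Suc n))" for n using z0 by simp
  have z2: "dist (z n) (gmult k g) < e0" for n using z0 by simp
  have z3: "\<not> (\<exists>w\<in>V. gmult k w = z n)" for n using z0 by simp
  have wex: "\<forall>n. \<exists>w. gmult k w = z n"
  proof
    fix n
    have "z n \<in> range (gmult k)" by (rule e0[OF z2])
    then show "\<exists>w. gmult k w = z n" by auto
  qed
  obtain w where w: "\<forall>n. gmult k (w n) = z n" using choice[OF wex] by blast
  have "\<forall>n. w n \<in> UNIV" by simp
  then obtain l r where r: "strict_mono r" "(w \<circ> r) \<longlonglongrightarrow> l"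
    using seq_compactE[OF compact_imp_seq_compact[OF compY]] by metis
  have zl: "z \<longlonglongrightarrow> gmult k g"
    by (rule seq_inv_tendsto) (rule z1)
  have t1: "(\<lambda>n. gmult k (w (r n))) \<longlonglongrightarrow> gmult k l"
    using isCont_tendsto_compose[OF cont_UNIV_isCont[OF gm_cont] r(2)[unfolded o_def]] .
  have "(z \<circ> r) \<longlonglongrightarrow> gmult k g" by (rule LIMSEQ_subseq_LIMSEQ[OF zl r(1)])
  moreover have "z \<circ> r = (\<lambda>n. gmult k (w (r n)))" using w by (simp add: o_def)
  ultimately have t2: "(\<lambda>n. gmult k (w (r n))) \<longlonglongrightarrow> gmult k g" by simp
  have eq: "gmult k l = gmult k g" using LIMSEQ_unique[OF t1 t2] .
  have "(\<lambda>n. w (r n) - (l - g)) \<longlonglongrightarrow> l - (l - g)"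
    using tendsto_diff[OF r(2)[unfolded o_def] tendsto_const] .
  then have "(\<lambda>n. w (r n) - (l - g)) \<longlonglongrightarrow> g" by simp
  then have "eventually (\<lambda>n. w (r n) - (l - g) \<in> V) sequentially"
    by (rule topological_tendstoD[OF _ assms(2,3)])
  then obtain N where N: "\<forall>n\<ge>N. w (r n) - (l - g) \<in> V" unfolding eventually_sequentially by blast
  then have n: "w (r N) - (l - g) \<in> V" by simp
  have "gmult k (w (r N) - (l - g)) = gmult k (w (r N)) - (gmult k l - gmult k g)"
    by (simp only: gm_minus)
  also have "\<dots> = z (r N)" using eq w by simp
  finally show False using z3 n by blast
qed

lemma nb:
  assumes "open U" "x0 \<in> U" "x0 \<in> X0"
  shows "\<exists>Op. open Op \<and> \<pi> x0 \<in> Op \<and> Op \<subseteq> \<pi> ` U"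
proof -
  have "compact (UNIV \<inter> - U)" using compact_Int_closed[OF compX] assms(1) by blast
  then have "compact (\<pi> ` (- U))"
    using compact_continuous_image[OF continuous_on_subset[OF contpi]] by auto
  then have cl: "closed (\<pi> ` (- U))" by (rule compact_imp_closed)
  have "\<pi> x0 \<notin> \<pi> ` (- U)"
  proof
    assume "\<pi> x0 \<in> \<pi> ` (- U)"
    then obtain x' where "x' \<notin> U" "\<pi> x' = \<pi> x0" by auto
    then have "x' \<in> \<pi> -` {\<pi> x0}" by simp
    then have "x' = x0" using assms(3) unfolding X0_def by blast
    then show False using \<open>x' \<notin> U\<close> assms(2) by simp
  qed
  moreover have "- \<pi> ` (- U) \<subseteq> \<pi> ` U"
  proof
    fix z assume "z \<in> - \<pi> ` (- U)"
    moreover obtain x' where "\<pi> x' = z" using surjpi by (metis surjD)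
    ultimately show "z \<in> \<pi> ` U" by auto
  qed
  moreover have "open (- \<pi> ` (- U))" using cl by (rule open_Compl)
  ultimately show ?thesis by blast
qed

lemma A_cover: "\<exists>An::nat \<Rightarrow> 'b set. Aset \<subseteq> (\<Union>n. An n) \<and> (\<forall>n. closed (An n) \<and> interior (An n) = {})"
proof -
  define An where "An n = {y. \<exists>x1 x2. \<pi> x1 = y \<and> \<pi> x2 = y \<and> inverse (real (Suc n)) \<le> dist x1 x2}" for n
  have clA: "closed (An n)" for n
  proof -
    let ?K = "{p::'a\<times>'a. \<pi> (fst p) = \<pi> (snd p)} \<inter> {p. inverse (real (Suc n)) \<le> dist (fst p) (snd p)}"
    have c1: "closed {p::'a\<times>'a. \<pi> (fst p) = \<pi> (snd p)}"
      by (intro closed_Collect_eq continuous_on_compose2[OF contpi] continuous_intros) auto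
    have c2: "closed {p::'a\<times>'a. inverse (real (Suc n)) \<le> dist (fst p) (snd p)}"
      by (intro closed_Collect_le continuous_intros)
    have cU: "compact (UNIV::('a\<times>'a) set)" using compact_Times[OF compX compX] by simp
    have "compact ((UNIV::('a\<times>'a) set) \<inter> ?K)"
      using compact_Int_closed[OF cU closed_Int[OF c1 c2]] by simp
    then have cK: "compact ?K" by simp
    have cf: "continuous_on UNIV (\<lambda>p::'a\<times>'a. \<pi> (fst p))"
      by (rule continuous_on_compose2[OF contpi continuous_on_fst]) auto
    have "compact ((\<lambda>p. \<pi> (fst p)) ` ?K)"
      by (rule compact_continuous_image[OF continuous_on_subset[OF cf subset_UNIV] cK])
    moreover have "(\<lambda>p. \<pi> (fst p)) ` ?K = An n"
    proof (intro set_eqI iffI)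
      fix y assume "y \<in> (\<lambda>p. \<pi> (fst p)) ` ?K"
      then obtain p where "p \<in> ?K" "y = \<pi> (fst p)" by blast
      then show "y \<in> An n" unfolding An_def by auto
    next
      fix y assume "y \<in> An n"
      then obtain x1 x2 where xx: "\<pi> x1 = y" "\<pi> x2 = y" "inverse (real (Suc n)) \<le> dist x1 x2"
        unfolding An_def by blast
      then have "(x1, x2) \<in> ?K" by simp
      moreover have "y = (\<lambda>p. \<pi> (fst p)) (x1, x2)" using xx(1) by simp
      ultimately show "y \<in> (\<lambda>p. \<pi> (fst p)) ` ?K" by (rule rev_image_eqI)
    qed
    ultimately show ?thesis by (metis compact_imp_closed)
  qed
  have intA: "interior (An n) = {}" for n
  proof (rule ccontr)
    assume "interior (An n) \<noteq> {}"
    then obtain z where z: "z \<in> interior (An n)" by auto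
    obtain x where x: "\<pi> x = z" using surjpi by (metis surjD)
    have "open (\<pi> -` interior (An n))" by (rule open_vimage[OF open_interior contpi])
    then obtain x0 where x0: "x0 \<in> X0" "\<pi> x0 \<in> interior (An n)"
      using dense_meets_open[OF X0_dense, of "\<pi> -` interior (An n)" x] x z by auto
    then have "\<pi> x0 \<in> An n" using interior_subset by blast
    then obtain x1 x2 where "\<pi> x1 = \<pi> x0" "\<pi> x2 = \<pi> x0" "inverse (real (Suc n)) \<le> dist x1 x2"
      unfolding An_def by blast
    moreover have "inverse (real (Suc n)) > 0" by simp
    ultimately have ne: "x1 \<noteq> x2" and m1: "x1 \<in> \<pi> -` {\<pi> x0}" and m2: "x2 \<in> \<pi> -` {\<pi> x0}" by auto
    have S: "\<pi> -` {\<pi> x0} = {x0}" using x0(1) unfolding X0_def by simp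
    have "x1 = x0" by (metis S m1 singletonD)
    moreover have "x2 = x0" by (metis S m2 singletonD)
    ultimately show False using ne by simp
  qed
  have covA: "Aset \<subseteq> (\<Union>n. An n)"
  proof
    fix a assume "a \<in> Aset"
    then obtain x1 x2 where xx: "x1 \<noteq> x2" "\<pi> x1 = a" "\<pi> x2 = a" by (auto simp: Aset_def)
    then have "dist x1 x2 > 0" by simp
    then obtain n where "inverse (real (Suc n)) < dist x1 x2" using reals_Archimedean by blast
    then have le: "inverse (real (Suc n)) \<le> dist x1 x2" by (rule less_imp_le)
    have "a \<in> An n" unfolding An_def using xx(2,3) le by blast
    then show "a \<in> (\<Union>n. An n)" by blast
  qed
  show ?thesis using clA intA covA by (intro exI[of _ An]) simp
qed

lemma fiber_unique:
  assumes "z \<notin> Aset" "\<pi> a = z" "\<pi> b = z"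
  shows "a = b"
proof (rule ccontr)
  assume "a \<noteq> b"
  then have "z \<in> Aset" unfolding Aset_def using assms(2,3) by (intro CollectI exI[of _ a] exI[of _ b]) simp
  then show False using assms(1) by simp
qed

end



context sett begin

definition "Bset d = (\<Union>j\<in>{1..d}. \<Union>i\<in>{1..<j}.
   setdiff_grp (ratset (of_nat j / of_nat (j - i)) Aset) (ratset (of_nat i / of_nat (j - i)) Aset))"

lemma CB_coprime:
  fixes i j :: nat and y g :: 'b
  assumes ij: "1 \<le> i" "i < j" "j \<le> d" and cop: "coprime i j"
    and Ai: "y + gmult (int i) g \<in> Aset" and Aj: "y + gmult (int j) g \<in> Aset"
  shows "y \<in> Bset d"
proof -
  define m where "m = j - i"
  have m0: "m > 0" using ij by (simp add: m_def)
  have "gcd (j - i) i = gcd j i" using ij by (intro gcd_diff1_nat) simp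
  then have copmi: "coprime m i" using cop by (simp add: m_def coprime_iff_gcd_eq_1 gcd.commute)
  have "gcd (j - m) m = gcd j m" using ij by (intro gcd_diff1_nat) (simp add: m_def)
  moreover have "j - m = i" using ij by (simp add: m_def)
  ultimately have "gcd j m = gcd i m" by simp
  then have copjm: "coprime j m" using copmi by (simp add: coprime_iff_gcd_eq_1 gcd.commute)
  have copim: "coprime i m" using copmi by (simp add: coprime_commute)
  define I where "I = int i"
  define J where "J = int j"
  define Mm where "Mm = int m"
  have MmJI: "Mm = J - I" using ij by (simp add: Mm_def J_def I_def m_def)
  have "coprime (j * i) m" using copjm copim by simp
  then have "coprime (J * I) Mm" by (simp add: J_def I_def Mm_def)
  then obtain u v where uv: "u * (J * I) + v * Mm = 1" using bezout_int[of "J * I" Mm] by auto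
  have cov: "UNIV = (\<Union>r\<in>{0..<Mm}. (\<lambda>z. gmult r \<alpha> + z) ` range (gmult Mm))"
    using M_cover[of Mm] m0 unfolding Mm_def by simp
  have "gmult J (y + gmult I g) \<in> (\<Union>r\<in>{0..<Mm}. (\<lambda>z. gmult r \<alpha> + z) ` range (gmult Mm))"
    by (subst cov[symmetric]) simp
  then obtain r w0 where rw: "r \<in> {0..<Mm}" "gmult J (y + gmult I g) = gmult r \<alpha> + gmult Mm w0"
    by blast
  define s where "s = - r * u"
  define t where "t = r * v"
  have rst: "Mm * t = r + J * I * s"
  proof -
    have "r = r * (u * (J * I) + v * Mm)" using uv by simp
    then show ?thesis unfolding s_def t_def by (simp add: algebra_simps)
  qed
  define G where "G = g + gmult s \<alpha>"
  define ai where "ai = y + gmult I G"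
  define aj where "aj = y + gmult J G"
  have ai_eq: "ai = (y + gmult I g) + gmult (I * s) \<alpha>"
    unfolding ai_def G_def by (simp add: gm_plus gm_mult algebra_simps)
  have aj_eq: "aj = (y + gmult J g) + gmult (J * s) \<alpha>"
    unfolding aj_def G_def by (simp add: gm_plus gm_mult algebra_simps)
  have aiA: "ai \<in> Aset" using A_shift[OF Ai] ai_eq I_def by simp
  have ajA: "aj \<in> Aset" using A_shift[OF Aj] aj_eq J_def by simp
  define u0 where "u0 = gmult t \<alpha> + w0"
  define v0 where "v0 = u0 - y"
  have u0eq: "gmult Mm u0 = gmult J ai"
  proof -
    have "gmult Mm u0 = gmult (Mm * t) \<alpha> + gmult Mm w0"
      unfolding u0_def by (simp add: gm_plus gm_mult)
    also have "\<dots> = gmult r \<alpha> + gmult Mm w0 + gmult (J * I * s) \<alpha>"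
      unfolding rst by (simp add: gm_add algebra_simps)
    also have "\<dots> = gmult J (y + gmult I g) + gmult J (gmult (I * s) \<alpha>)"
      using rw(2) by (simp add: gm_mult mult.assoc)
    also have "\<dots> = gmult J ai" unfolding ai_eq by (simp add: gm_plus)
    finally show ?thesis .
  qed
  have v0eq: "gmult Mm v0 = gmult I aj"
  proof -
    have "gmult Mm v0 = gmult J ai - gmult Mm y" unfolding v0_def by (simp add: gm_minus u0eq)
    also have "\<dots> = gmult J y + gmult (J * I) G - (gmult J y - gmult I y)"
      unfolding ai_def MmJI by (simp add: gm_plus gm_mult gm_diff)
    also have "\<dots> = gmult I y + gmult (I * J) G" by (simp add: algebra_simps mult.commute)
    also have "\<dots> = gmult I aj" unfolding aj_def by (simp add: gm_plus gm_mult)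
    finally show ?thesis .
  qed
  have qj: "quotient_of (of_nat j / of_nat m :: rat) = (J, Mm)"
    unfolding J_def Mm_def by (rule quot_nat[OF copjm m0])
  have qi: "quotient_of (of_nat i / of_nat m :: rat) = (I, Mm)"
    unfolding I_def Mm_def by (rule quot_nat[OF copim m0])
  have u0R: "u0 \<in> ratset (of_nat j / of_nat (j - i)) Aset"
    unfolding ratset_def m_def[symmetric] qj using u0eq aiA by auto
  have v0R: "v0 \<in> ratset (of_nat i / of_nat (j - i)) Aset"
    unfolding ratset_def m_def[symmetric] qi using v0eq ajA by auto
  have "y = u0 - v0" unfolding v0_def by simp
  then have "y \<in> setdiff_grp (ratset (of_nat j / of_nat (j - i)) Aset) (ratset (of_nat i / of_nat (j - i)) Aset)"
    unfolding setdiff_grp_def using u0R v0R by blast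
  moreover have "j \<in> {1..d}" "i \<in> {1..<j}" using ij by auto
  ultimately show ?thesis unfolding Bset_def by blast
qed

lemma CB:
  fixes i j :: nat and y g :: 'b
  assumes ij: "1 \<le> i" "i < j" "j \<le> d"
    and Ai: "y + gmult (int i) g \<in> Aset" and Aj: "y + gmult (int j) g \<in> Aset"
  shows "y \<in> Bset d"
proof -
  define e where "e = gcd i j"
  have e0: "e > 0" using ij by (simp add: e_def)
  define i' where "i' = i div e"
  define j' where "j' = j div e"
  have ii: "i = i' * e" unfolding i'_def e_def by simp
  have jj: "j = j' * e" unfolding j'_def e_def by simp
  have cop: "coprime i' j'" unfolding i'_def j'_def e_def using ij by (intro div_gcd_coprime) simp
  have h1: "1 \<le> i'" using ii ij by (metis less_one mult_zero_left not_le)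
  have h2: "i' < j'" using ii jj ij e0 by (metis mult_less_cancel2)
  have h3: "j' \<le> d"
  proof -
    have h: "j' \<le> j' * e" using e0 by simp
    show ?thesis using jj ij(3) h by linarith
  qed
  have h4: "y + gmult (int i') (gmult (int e) g) \<in> Aset"
    using Ai by (simp add: ii gm_mult[symmetric])
  have h5: "y + gmult (int j') (gmult (int e) g) \<in> Aset"
    using Aj by (simp add: jj gm_mult[symmetric])
  show ?thesis by (rule CB_coprime[OF h1 h2 h3 cop h4 h5])
qed

end



lemma compact_fun_UNIV:
  assumes "compact (UNIV :: 'a::metric_space set)"
  shows "compact (UNIV :: (nat \<Rightarrow> 'a) set)"
proof -
  have "compactin (product_topology (\<lambda>_::nat. (euclidean::'a topology)) UNIV) (PiE UNIV (\<lambda>_. UNIV))"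
    using compactin_PiE[of "\<lambda>_::nat. (euclidean::'a topology)" UNIV "\<lambda>_. UNIV"] assms
    by (simp add: compactin_euclidean_iff)
  then show ?thesis by (simp add: euclidean_product_topology compactin_euclidean_iff PiE_UNIV_domain)
qed

lemma img_closure:
  fixes f :: "'c::topological_space \<Rightarrow> 'd::t2_space"
  assumes "continuous_on UNIV f" "compact (closure S)"
  shows "f ` closure S = closure (f ` S)"
proof
  show "f ` closure S \<subseteq> closure (f ` S)" by (rule continuous_image_closure_subset[OF assms(1)]) simp
  have "compact (f ` closure S)"
    by (rule compact_continuous_image[OF continuous_on_subset[OF assms(1)] assms(2)]) simp
  then have "closed (f ` closure S)" by (rule compact_imp_closed)
  moreover have "f ` S \<subseteq> f ` closure S" using closure_subset by blast
  ultimately show "closure (f ` S) \<subseteq> f ` closure S" by (intro closure_minimal)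
qed

context sett begin

definition "gen d x n = (\<lambda>k. if k \<in> {1..d} then zpow T (inv T) (int k * n) x else undefined)"
definition "tup d y g = (\<lambda>k. if k \<in> {1..d} then y + gmult (int k) g else (undefined::'b))"

lemma Lset_eq: "Lset T d x = closure (range (gen d x))"
  unfolding Lset_def gen_def by (rule arg_cong[where f=closure]) auto

lemma compL: "compact (Lset T d x)"
  using compact_Int_closed[OF compact_fun_UNIV[OF compX], of "Lset T d x"] by (simp add: Lset_eq)

lemma Lset_ext: "Lset T d x \<subseteq> extensional {1..d}"
proof -
  have e: "extensional {1..d} = (\<Inter>k\<in>-{1..d}. (\<lambda>f::nat\<Rightarrow>'a. f k) -` {undefined})"
    by (auto simp: extensional_def)
  have "closed ((\<lambda>f::nat\<Rightarrow>'a. f k) -` {undefined})" for k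
    by (rule closed_vimage[OF closed_singleton continuous_on_product_coordinates])
  then have cl: "closed (extensional {1..d} :: (nat \<Rightarrow> 'a) set)"
    unfolding e by (intro closed_INT) auto
  have "range (gen d x) \<subseteq> extensional {1..d}" by (auto simp: gen_def extensional_def)
  then show ?thesis unfolding Lset_eq using closure_minimal cl by blast
qed

lemma cont_prodmap: "continuous_on UNIV (prodmap \<pi> d)"
proof (rule continuous_on_coordinatewise_then_product)
  fix k
  show "continuous_on UNIV (\<lambda>f. prodmap \<pi> d f k)"
  proof (cases "k \<in> {1..d}")
    case True
    have "continuous_on UNIV (\<lambda>f::nat\<Rightarrow>'a. \<pi> (f k))"
      by (rule continuous_on_compose2[OF contpi continuous_on_product_coordinates]) auto
    then show ?thesis unfolding prodmap_def if_P[OF True] .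
  next
    case False
    then show ?thesis unfolding prodmap_def if_not_P[OF False] by simp
  qed
qed

lemma cont_tup: "continuous_on UNIV (tup d y)"
proof (rule continuous_on_coordinatewise_then_product)
  fix k
  show "continuous_on UNIV (\<lambda>g. tup d y g k)"
  proof (cases "k \<in> {1..d}")
    case True
    have "continuous_on UNIV (\<lambda>g. y + gmult (int k) g)"
      by (intro continuous_on_add continuous_on_const gm_cont)
    then show ?thesis unfolding tup_def if_P[OF True] .
  next
    case False
    then show ?thesis unfolding tup_def if_not_P[OF False] by simp
  qed
qed

lemma prodmap_gen: "prodmap \<pi> d (gen d x n) = tup d (\<pi> x) (gmult n \<alpha>)"
  by (auto simp: prodmap_def gen_def tup_def pi_zpow gm_mult fun_eq_iff)

lemma img_L: "prodmap \<pi> d ` Lset T d x = range (tup d (\<pi> x))"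
proof -
  have "prodmap \<pi> d ` Lset T d x = closure (prodmap \<pi> d ` range (gen d x))"
    unfolding Lset_eq by (rule img_closure[OF cont_prodmap]) (use compL[unfolded Lset_eq] in simp)
  also have "prodmap \<pi> d ` range (gen d x) = tup d (\<pi> x) ` range (\<lambda>n. gmult n \<alpha>)"
    by (simp add: image_image prodmap_gen)
  also have "closure (tup d (\<pi> x) ` range (\<lambda>n. gmult n \<alpha>)) = tup d (\<pi> x) ` closure (range (\<lambda>n. gmult n \<alpha>))"
    by (rule img_closure[OF cont_tup, symmetric]) (simp add: orbY compY)
  finally show ?thesis by (simp add: orbY)
qed

lemma tup_eq: "prodmap \<pi> d f = tup d y g \<Longrightarrow> k \<in> {1..d} \<Longrightarrow> \<pi> (f k) = y + gmult (int k) g"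
  by (drule fun_cong[of _ _ k]) (simp add: prodmap_def tup_def)

lemma gg: "closure {g. \<forall>k\<in>{1..d}. y + gmult (int k) g \<notin> Aset} = UNIV"
proof -
  obtain An :: "nat \<Rightarrow> 'b set" where An0: "Aset \<subseteq> (\<Union>n. An n) \<and> (\<forall>n. closed (An n) \<and> interior (An n) = {})"
    using A_cover by (elim exE) (rule that)
  have An: "Aset \<subseteq> (\<Union>n. An n)" "\<And>n. closed (An n)" "\<And>n. interior (An n) = {}"
    using An0 by auto
  define N where "N = (\<lambda>(k::nat, n::nat). {g. y + gmult (int k) g \<in> An n})"
  define \<G> where "\<G> = N ` ({1..d} \<times> UNIV)"
  have cG: "countable \<G>" unfolding \<G>_def by (intro countable_image) simp
  have clN: "closed (N (k, n))" for k n
  proof -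
    have "N (k, n) = (\<lambda>g. y + gmult (int k) g) -` An n" unfolding N_def by auto
    moreover have "continuous_on UNIV (\<lambda>g. y + gmult (int k) g)"
      by (intro continuous_on_add continuous_on_const gm_cont)
    ultimately show ?thesis using closed_vimage[OF An(2)] by simp
  qed
  have intN: "interior (N (k, n)) = {}" if "k \<ge> 1" for k n
  proof (rule ccontr)
    assume "interior (N (k,n)) \<noteq> {}"
    then obtain g0 where g0: "g0 \<in> interior (N (k,n))" by auto
    have "int k > 0" using that by simp
    then obtain e where e: "e > 0" "\<And>z. dist z (gmult (int k) g0) < e \<Longrightarrow> \<exists>w\<in>interior (N (k,n)). gmult (int k) w = z"
      using mult_open[of "int k" "interior (N (k,n))" g0] g0 by auto
    define Op where "Op = (\<lambda>q. q - y) -` ball (gmult (int k) g0) e"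
    have c: "continuous_on UNIV (\<lambda>q::'b. q - y)" by (intro continuous_intros)
    have oOp: "open Op" unfolding Op_def by (rule open_vimage[OF open_ball c])
    have inOp: "y + gmult (int k) g0 \<in> Op" unfolding Op_def using e(1) by simp
    have "Op \<subseteq> An n"
    proof
      fix q assume "q \<in> Op"
      then have "dist (q - y) (gmult (int k) g0) < e" unfolding Op_def by (simp add: dist_commute)
      then obtain w where w: "w \<in> interior (N (k,n))" "gmult (int k) w = q - y" using e(2) by blast
      then have "w \<in> N (k,n)" using interior_subset by blast
      then have "y + gmult (int k) w \<in> An n" unfolding N_def by simp
      then show "q \<in> An n" using w(2) by (simp add: algebra_simps)
    qed
    then have "Op \<subseteq> interior (An n)" using oOp by (rule interior_maximal)
    then show False using An(3) inOp by auto
  qed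
  have "interior (\<Union>\<G>) = {}"
  proof (rule baire_compact[OF compY cG])
    fix G assume "G \<in> \<G>"
    then obtain k n where "k \<in> {1..d}" "G = N (k, n)" unfolding \<G>_def by auto
    then show "closed G \<and> interior G = {}" using clN intN by simp
  qed
  then have cl: "closure (- \<Union>\<G>) = UNIV" by (simp add: closure_complement)
  have "- \<Union>\<G> \<subseteq> {g. \<forall>k\<in>{1..d}. y + gmult (int k) g \<notin> Aset}"
  proof
    fix g assume g: "g \<in> - \<Union>\<G>"
    have "y + gmult (int k) g \<notin> Aset" if k: "k \<in> {1..d}" for k
    proof
      assume "y + gmult (int k) g \<in> Aset"
      then obtain n where "y + gmult (int k) g \<in> An n" using An(1) by blast
      then have "g \<in> N (k, n)" unfolding N_def by simp
      moreover have "N (k,n) \<in> \<G>" unfolding \<G>_def using k by blast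
      ultimately show False using g by blast
    qed
    then show "g \<in> {g. \<forall>k\<in>{1..d}. y + gmult (int k) g \<notin> Aset}" by blast
  qed
  then have "closure (- \<Union>\<G>) \<subseteq> closure {g. \<forall>k\<in>{1..d}. y + gmult (int k) g \<notin> Aset}"
    by (rule closure_mono)
  then show ?thesis using cl by blast
qed

lemma approx:
  assumes k0: "k0 \<in> {1..d}" and x1: "\<pi> x1 = y + gmult (int k0) g" and e: "e > 0"
  shows "\<exists>x' g'. dist x' x1 < e \<and> dist g' g < e \<and> (\<forall>k\<in>{1..d}. y + gmult (int k) g' \<notin> Aset)
           \<and> \<pi> x' = y + gmult (int k0) g'"
proof -
  have "int k0 > 0" using k0 by simp
  then obtain \<epsilon> where \<epsilon>: "\<epsilon> > 0" "\<And>z. dist z (gmult (int k0) g) < \<epsilon> \<Longrightarrow> \<exists>w\<in>ball g e. gmult (int k0) w = z"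
    using mult_open[of "int k0" "ball g e" g] e by auto
  define U' where "U' = ball x1 e \<inter> (\<lambda>x. \<pi> x - y) -` ball (gmult (int k0) g) \<epsilon>"
  have c: "continuous_on UNIV (\<lambda>x. \<pi> x - y)" by (intro continuous_on_diff contpi continuous_on_const)
  have oU: "open U'" unfolding U'_def by (intro open_Int open_ball open_vimage[OF open_ball c])
  have x1U: "x1 \<in> U'" unfolding U'_def using e \<epsilon>(1) x1 by simp
  obtain x0 where x0: "x0 \<in> X0" "x0 \<in> U'" using dense_meets_open[OF X0_dense oU x1U] by blast
  obtain Op where Op: "open Op" "\<pi> x0 \<in> Op" "Op \<subseteq> \<pi> ` U'" using nb[OF oU x0(2) x0(1)] by blast
  have "dist (\<pi> x0 - y) (gmult (int k0) g) < \<epsilon>" using x0(2) unfolding U'_def by (simp add: dist_commute)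
  then obtain w where w: "w \<in> ball g e" "gmult (int k0) w = \<pi> x0 - y" using \<epsilon>(2) by blast
  define W where "W = ball g e \<inter> (\<lambda>w. y + gmult (int k0) w) -` Op"
  have c2: "continuous_on UNIV (\<lambda>w. y + gmult (int k0) w)"
    by (intro continuous_on_add continuous_on_const gm_cont)
  have oW: "open W" unfolding W_def by (intro open_Int open_ball open_vimage[OF Op(1) c2])
  have wW: "w \<in> W" unfolding W_def using w Op(2) by (simp add: algebra_simps)
  obtain g' where g': "g' \<in> {g. \<forall>k\<in>{1..d}. y + gmult (int k) g \<notin> Aset}" "g' \<in> W"
    using dense_meets_open[OF gg oW wW] by blast
  have "y + gmult (int k0) g' \<in> \<pi> ` U'" using g'(2) Op(3) unfolding W_def by auto
  then obtain x' where x': "x' \<in> U'" "\<pi> x' = y + gmult (int k0) g'" by auto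
  have "dist x' x1 < e" using x'(1) unfolding U'_def by (simp add: dist_commute)
  moreover have "dist g' g < e" using g'(2) unfolding W_def by (simp add: dist_commute)
  ultimately show ?thesis using x'(2) g'(1) by blast
qed

end



context sett begin

lemma sat:
  assumes two: "\<And>g k1 k2. k1 \<in> {1..d} \<Longrightarrow> k2 \<in> {1..d} \<Longrightarrow> k1 < k2 \<Longrightarrow>
      \<pi> x + gmult (int k1) g \<in> Aset \<Longrightarrow> \<pi> x + gmult (int k2) g \<in> Aset \<Longrightarrow> False"
  shows "{f \<in> extensional {1..d}. prodmap \<pi> d f \<in> prodmap \<pi> d ` Lset T d x} = Lset T d x"
proof
  show "Lset T d x \<subseteq> {f \<in> extensional {1..d}. prodmap \<pi> d f \<in> prodmap \<pi> d ` Lset T d x}"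
    using Lset_ext by blast
next
  show "{f \<in> extensional {1..d}. prodmap \<pi> d f \<in> prodmap \<pi> d ` Lset T d x} \<subseteq> Lset T d x"
  proof
    fix f assume "f \<in> {f \<in> extensional {1..d}. prodmap \<pi> d f \<in> prodmap \<pi> d ` Lset T d x}"
    then have fe: "f \<in> extensional {1..d}" and fL: "prodmap \<pi> d f \<in> prodmap \<pi> d ` Lset T d x" by auto
    define y where "y = \<pi> x"
    obtain g where g: "prodmap \<pi> d f = tup d y g" using fL unfolding img_L y_def by blast
    have fk: "\<pi> (f k) = y + gmult (int k) g" if "k \<in> {1..d}" for k using tup_eq[OF g that] .
    have outside: "t k = f k" if "t \<in> Lset T d x" "k \<notin> {1..d}" for t k
    proof -
      have "t \<in> extensional {1..d}" using that(1) Lset_ext by blast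
      then show ?thesis using fe that(2) by (simp add: extensional_def)
    qed
    show "f \<in> Lset T d x"
    proof (cases "\<exists>k0\<in>{1..d}. y + gmult (int k0) g \<in> Aset")
      case False
      have "tup d y g \<in> prodmap \<pi> d ` Lset T d x" unfolding img_L y_def by simp
      then obtain h' where h'0: "h' \<in> Lset T d x" "tup d y g = prodmap \<pi> d h'" by (rule imageE)
      then have h': "h' \<in> Lset T d x" "prodmap \<pi> d h' = tup d y g" by simp_all
      have "h' = f"
      proof
        fix k
        show "h' k = f k"
        proof (cases "k \<in> {1..d}")
          case True
          have "y + gmult (int k) g \<notin> Aset" using False True by blast
          then show ?thesis using fiber_unique tup_eq[OF h'(2) True] fk[OF True] by blast
        next
          case False
          then show ?thesis using outside h'(1) by blast
        qed
      qed
      then show ?thesis using h'(1) by simp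
    next
      case True
      then obtain k0 where k0: "k0 \<in> {1..d}" "y + gmult (int k0) g \<in> Aset" by blast
      have others: "y + gmult (int k) g \<notin> Aset" if "k \<in> {1..d}" "k \<noteq> k0" for k
      proof
        assume kA: "y + gmult (int k) g \<in> Aset"
        show False
        proof (cases "k < k0")
          case True
          then show False using two[of k k0 g] that(1) k0 kA y_def by blast
        next
          case False
          then have "k0 < k" using that(2) by simp
          then show False using two[of k0 k g] that(1) k0 kA y_def by blast
        qed
      qed
      have ex: "\<forall>n. \<exists>p. dist (fst p) (f k0) < inverse (real (Suc n)) \<and> dist (snd p) g < inverse (real (Suc n))
          \<and> (\<forall>k\<in>{1..d}. y + gmult (int k) (snd p) \<notin> Aset) \<and> \<pi> (fst p) = y + gmult (int k0) (snd p)"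
      proof
        fix n
        obtain x' g' where "dist x' (f k0) < inverse (real (Suc n))" "dist g' g < inverse (real (Suc n))"
          "\<forall>k\<in>{1..d}. y + gmult (int k) g' \<notin> Aset" "\<pi> x' = y + gmult (int k0) g'"
          using approx[OF k0(1) fk[OF k0(1)], of "inverse (real (Suc n))"] by auto
        then show "\<exists>p. dist (fst p) (f k0) < inverse (real (Suc n)) \<and> dist (snd p) g < inverse (real (Suc n))
          \<and> (\<forall>k\<in>{1..d}. y + gmult (int k) (snd p) \<notin> Aset) \<and> \<pi> (fst p) = y + gmult (int k0) (snd p)"
          by (intro exI[of _ "(x', g')"]) simp
      qed
      obtain P where P: "\<forall>n. dist (fst (P n)) (f k0) < inverse (real (Suc n)) \<and> dist (snd (P n)) g < inverse (real (Suc n))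
          \<and> (\<forall>k\<in>{1..d}. y + gmult (int k) (snd (P n)) \<notin> Aset) \<and> \<pi> (fst (P n)) = y + gmult (int k0) (snd (P n))"
        using choice[OF ex] by blast
      define xs where "xs n = fst (P n)" for n
      define gs where "gs n = snd (P n)" for n
      have xg1: "dist (xs n) (f k0) < inverse (real (Suc n))" for n using P unfolding xs_def by blast
      have xg2: "dist (gs n) g < inverse (real (Suc n))" for n using P unfolding gs_def by blast
      have xg3: "y + gmult (int k) (gs n) \<notin> Aset" if "k \<in> {1..d}" for k n using P that unfolding gs_def by blast
      have xg4: "\<pi> (xs n) = y + gmult (int k0) (gs n)" for n using P unfolding xs_def gs_def by blast
      have tex: "\<forall>n. \<exists>t. t \<in> Lset T d x \<and> prodmap \<pi> d t = tup d y (gs n)"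
      proof
        fix n
        have "tup d y (gs n) \<in> prodmap \<pi> d ` Lset T d x" unfolding img_L y_def by simp
        then obtain t where "t \<in> Lset T d x" "tup d y (gs n) = prodmap \<pi> d t" by (rule imageE)
        then show "\<exists>t. t \<in> Lset T d x \<and> prodmap \<pi> d t = tup d y (gs n)" by auto
      qed
      obtain ts where ts0: "\<forall>n. ts n \<in> Lset T d x \<and> prodmap \<pi> d (ts n) = tup d y (gs n)"
        using choice[OF tex] by blast
      have ts1: "\<forall>n. ts n \<in> Lset T d x" using ts0 by blast
      have ts2: "prodmap \<pi> d (ts n) = tup d y (gs n)" for n using ts0 by blast
      obtain t r where tr: "t \<in> Lset T d x" "strict_mono r" "(ts \<circ> r) \<longlonglongrightarrow> t"
        using seq_compactE[OF compact_imp_seq_compact[OF compL] ts1] by metis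
      have coord: "(\<lambda>n. ts (r n) k) \<longlonglongrightarrow> t k" for k
        using isCont_tendsto_compose[OF cont_UNIV_isCont[OF continuous_on_product_coordinates] tr(3)[unfolded o_def], of k]
        by simp
      have xsl: "xs \<longlonglongrightarrow> f k0" by (rule seq_inv_tendsto) (rule xg1)
      have gsl: "gs \<longlonglongrightarrow> g" by (rule seq_inv_tendsto) (rule xg2)
      have tsk0: "ts n k0 = xs n" for n
        by (rule fiber_unique[OF xg3[OF k0(1), of n] tup_eq[OF ts2 k0(1)] xg4])
      have tk0: "t k0 = f k0"
      proof -
        have "(xs \<circ> r) \<longlonglongrightarrow> f k0" using LIMSEQ_subseq_LIMSEQ[OF xsl tr(2)] .
        then have "(\<lambda>n. ts (r n) k0) \<longlonglongrightarrow> f k0" by (simp add: o_def tsk0)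
        then show ?thesis using coord[of k0] LIMSEQ_unique by blast
      qed
      have "t = f"
      proof
        fix k
        show "t k = f k"
        proof (cases "k \<in> {1..d}")
          case kin: True
          show ?thesis
          proof (cases "k = k0")
            case True
            then show ?thesis using tk0 by simp
          next
            case False
            have l1: "(\<lambda>n. \<pi> (ts (r n) k)) \<longlonglongrightarrow> \<pi> (t k)"
              using isCont_tendsto_compose[OF cont_UNIV_isCont[OF contpi] coord[of k]] .
            have gr: "(\<lambda>n. gs (r n)) \<longlonglongrightarrow> g" using LIMSEQ_subseq_LIMSEQ[OF gsl tr(2)] by (simp add: o_def)
            have "(\<lambda>n. y + gmult (int k) (gs (r n))) \<longlonglongrightarrow> y + gmult (int k) g"
              by (rule tendsto_add[OF tendsto_const isCont_tendsto_compose[OF cont_UNIV_isCont[OF gm_cont] gr]])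
            moreover have "(\<lambda>n. \<pi> (ts (r n) k)) = (\<lambda>n. y + gmult (int k) (gs (r n)))"
              using tup_eq[OF ts2 kin] by simp
            ultimately have "\<pi> (t k) = y + gmult (int k) g" using l1 LIMSEQ_unique by metis
            then show ?thesis using fiber_unique[OF others[OF kin False]] fk[OF kin] by blast
          qed
        next
          case False
          then show ?thesis using outside tr(1) by blast
        qed
      qed
      then show ?thesis using tr(1) by simp
    qed
  qed
qed

lemma tcf:
  assumes fc: "first_category (Bset d)"
  shows "top_char_factor T \<pi> d"
proof -
  obtain F :: "nat \<Rightarrow> 'b set" where F: "Bset d \<subseteq> (\<Union>n. F n)" "\<And>n. interior (closure (F n)) = {}"
    using fc unfolding first_category_def by blast
  define \<Omega> where "\<Omega> = (\<Inter>n. \<pi> -` (- closure (F n)))"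
  have gd: "gdelta \<Omega>" unfolding \<Omega>_def
    by (rule gdelta.intros) (intro open_vimage open_Compl closed_closure contpi)
  have nd: "interior (\<pi> -` closure (F n)) = {}" for n
  proof (rule ccontr)
    assume "interior (\<pi> -` closure (F n)) \<noteq> {}"
    then obtain x where x: "x \<in> interior (\<pi> -` closure (F n))" by auto
    obtain x0 where x0: "x0 \<in> X0" "x0 \<in> interior (\<pi> -` closure (F n))"
      using dense_meets_open[OF X0_dense open_interior x] by blast
    obtain Op where Op: "open Op" "\<pi> x0 \<in> Op" "Op \<subseteq> \<pi> ` interior (\<pi> -` closure (F n))"
      using nb[OF open_interior x0(2) x0(1)] by blast
    have "Op \<subseteq> closure (F n)" using Op(3) interior_subset by blast
    then have "Op \<subseteq> interior (closure (F n))" using Op(1) by (rule interior_maximal)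
    then show False using F(2) Op(2) by auto
  qed
  have "interior (\<Union>(range (\<lambda>n. \<pi> -` closure (F n)))) = {}"
  proof (rule baire_compact[OF compX])
    show "countable (range (\<lambda>n. \<pi> -` closure (F n)))" by simp
    fix G assume "G \<in> range (\<lambda>n. \<pi> -` closure (F n))"
    then obtain n where n: "G = \<pi> -` closure (F n)" by auto
    have "closed G" unfolding n by (rule closed_vimage[OF closed_closure contpi])
    then show "closed G \<and> interior G = {}" using nd n by simp
  qed
  moreover have "\<Omega> = - (\<Union>(range (\<lambda>n. \<pi> -` closure (F n))))" unfolding \<Omega>_def by blast
  ultimately have dense: "closure \<Omega> = UNIV" by (metis closure_complement Compl_empty_eq)
  have "\<forall>x\<in>\<Omega>. {f \<in> extensional {1..d}. prodmap \<pi> d f \<in> prodmap \<pi> d ` Lset T d x} = Lset T d x"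
  proof
    fix x assume x: "x \<in> \<Omega>"
    have yB: "\<pi> x \<notin> Bset d"
    proof
      assume "\<pi> x \<in> Bset d"
      then obtain n where "\<pi> x \<in> F n" using F(1) by blast
      then have "\<pi> x \<in> closure (F n)" using closure_subset by blast
      then show False using x unfolding \<Omega>_def by blast
    qed
    show "{f \<in> extensional {1..d}. prodmap \<pi> d f \<in> prodmap \<pi> d ` Lset T d x} = Lset T d x"
    proof (rule sat)
      fix g k1 k2 assume k: "k1 \<in> {1..d}" "k2 \<in> {1..d}" "k1 < k2"
        "\<pi> x + gmult (int k1) g \<in> Aset" "\<pi> x + gmult (int k2) g \<in> Aset"
      have "1 \<le> k1" "k2 \<le> d" using k by auto
      then have "\<pi> x \<in> Bset d" using CB[of k1 k2 d "\<pi> x" g] k by blast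
      then show False using yB by simp
    qed
  qed
  then show ?thesis unfolding top_char_factor_def using gd dense by blast
qed

end

theorem theorem6p2:
  fixes T :: "'a::metric_space \<Rightarrow> 'a"
    and \<pi> :: "'a \<Rightarrow> 'b::{topological_ab_group_add, metric_space}"
    and \<alpha> :: 'b and d :: nat and A :: "'b set"
  assumes "minimal_system T"
    and "max_eq_factor T \<pi> \<alpha>"
    and "almost_one_to_one \<pi>"
    and "d \<ge> 2"
    and "A = {y. \<exists>x1 x2. x1 \<noteq> x2 \<and> \<pi> x1 = y \<and> \<pi> x2 = y}"
  shows "(first_category (setdiff_grp (ratset 2 A) A) \<longrightarrow> top_char_factor T \<pi> 2) \<and>
         (d \<ge> 3 \<and> first_category (\<Union>j\<in>{1..d}. \<Union>i\<in>{1..<j}.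
              setdiff_grp (ratset (of_nat j / of_nat (j - i)) A) (ratset (of_nat i / of_nat (j - i)) A))
            \<longrightarrow> top_char_factor T \<pi> d)"
proof -
  interpret S: sett T \<pi> \<alpha> using assms(1-3) by unfold_locales
  have AA: "A = S.Aset" using assms(5) by (simp add: S.Aset_def)
  have r1: "ratset 1 A = A" by (simp add: ratset_def)
  have B2: "S.Bset 2 = setdiff_grp (ratset 2 A) A"
  proof -
    have e1: "{1..2::nat} = {1, 2}" by auto
    have e2: "{1..<2::nat} = {1}" by auto
    have e3: "(of_nat 2 / of_nat (2 - 1) :: rat) = 2" by simp
    have e4: "(of_nat 1 / of_nat (2 - 1) :: rat) = 1" by simp
    show ?thesis unfolding S.Bset_def AA[symmetric] e1
      by (simp only: e2 e3 e4 r1 UN_insert UN_empty atLeastLessThan_singleton) (simp add: r1)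
  qed
  show ?thesis
  proof (intro conjI impI)
    assume "first_category (setdiff_grp (ratset 2 A) A)"
    then show "top_char_factor T \<pi> 2" using S.tcf[of 2] B2 by simp
  next
    assume "3 \<le> d \<and> first_category (\<Union>j\<in>{1..d}. \<Union>i\<in>{1..<j}.
              setdiff_grp (ratset (of_nat j / of_nat (j - i)) A) (ratset (of_nat i / of_nat (j - i)) A))"
    then have "first_category (S.Bset d)" unfolding S.Bset_def AA by simp
    then show "top_char_factor T \<pi> d" by (rule S.tcf)
  qed
qed

end
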